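(* Let $\mathbb{F}$ be a field with $\mathrm{char}(\mathbb{F})\neq 2$ and let $L$ be a finite-dimensional semisimple Lie algebra over $\mathbb{F}$. Then $b(L)\geq 2$.
   Context: For $x\in L$, $b(x)=\mathrm{rank}(\mathrm{ad}_x)$ and the breadth of $L$ is $b(L)=\max\{b(x)\mid x\in L\}$. *)

theory Defs
  imports Complex_Main
begin

text \<open>A Lie algebra over the field 'k, with underlying vector space the whole type 'v
  (scalar multiplication scale, bracket br).\<close>
definition lie_algebra :: "('k::field \<Rightarrow> 'v::ab_group_add \<Rightarrow> 'v) \<Rightarrow> ('v \<Rightarrow> 'v \<Rightarrow> 'v) \<Rightarrow> bool" where
  "lie_algebra scale br \<longleftrightarrow>
     Vector_Spaces.vector_space scale \<and>
     (\<forall>x y z. br (x + y) z = br x z + br y z) \<and>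
     (\<forall>x y z. br x (y + z) = br x y + br x z) \<and>
     (\<forall>a x y. br (scale a x) y = scale a (br x y)) \<and>
     (\<forall>a x y. br x (scale a y) = scale a (br x y)) \<and>
     (\<forall>x. br x x = 0) \<and>
     (\<forall>x y z. br x (br y z) + br y (br z x) + br z (br x y) = 0)"

definition finite_dimensional :: "('k::field \<Rightarrow> 'v::ab_group_add \<Rightarrow> 'v) \<Rightarrow> bool" where
  "finite_dimensional scale \<longleftrightarrow> (\<exists>B. finite B \<and> module.span scale B = UNIV)"

definition lie_ideal :: "('k::field \<Rightarrow> 'v::ab_group_add \<Rightarrow> 'v) \<Rightarrow> ('v \<Rightarrow> 'v \<Rightarrow> 'v) \<Rightarrow> 'v set \<Rightarrow> bool" where
  "lie_ideal scale br I \<longleftrightarrow> module.subspace scale I \<and> (\<forall>x y. y \<in> I \<longrightarrow> br x y \<in> I)"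

fun derived_series :: "('k::field \<Rightarrow> 'v::ab_group_add \<Rightarrow> 'v) \<Rightarrow> ('v \<Rightarrow> 'v \<Rightarrow> 'v) \<Rightarrow> 'v set \<Rightarrow> nat \<Rightarrow> 'v set" where
  "derived_series scale br I 0 = I"
| "derived_series scale br I (Suc n) =
     module.span scale {br a b | a b. a \<in> derived_series scale br I n \<and> b \<in> derived_series scale br I n}"

definition lie_solvable :: "('k::field \<Rightarrow> 'v::ab_group_add \<Rightarrow> 'v) \<Rightarrow> ('v \<Rightarrow> 'v \<Rightarrow> 'v) \<Rightarrow> 'v set \<Rightarrow> bool" where
  "lie_solvable scale br I \<longleftrightarrow> (\<exists>n. derived_series scale br I n = {0})"

definition semisimple :: "('k::field \<Rightarrow> 'v::ab_group_add \<Rightarrow> 'v) \<Rightarrow> ('v \<Rightarrow> 'v \<Rightarrow> 'v) \<Rightarrow> bool" where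
  "semisimple scale br \<longleftrightarrow> (UNIV :: 'v set) \<noteq> {0} \<and>
     (\<forall>I. lie_ideal scale br I \<and> lie_solvable scale br I \<longrightarrow> I = {0})"

text \<open>b(x) = rank(ad_x) = dim of the image of ad_x = br x.\<close>
definition breadth_elem :: "('k::field \<Rightarrow> 'v::ab_group_add \<Rightarrow> 'v) \<Rightarrow> ('v \<Rightarrow> 'v \<Rightarrow> 'v) \<Rightarrow> 'v \<Rightarrow> nat" where
  "breadth_elem scale br x = vector_space.dim scale (range (br x))"

definition breadth :: "('k::field \<Rightarrow> 'v::ab_group_add \<Rightarrow> 'v) \<Rightarrow> ('v \<Rightarrow> 'v \<Rightarrow> 'v) \<Rightarrow> nat" where
  "breadth scale br = Max (range (breadth_elem scale br))"

end

theory Submission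
  imports Defs
begin

lemma lie_facts:
  assumes "lie_algebra scale br"
  shows "vector_space scale" "br x (y + z) = br x y + br x z" "br (x + y) z = br x z + br y z"
    "br x x = 0" "br x y = - br y x" "br (scale a x) y = scale a (br x y)"
    "br x (scale a y) = scale a (br x y)"
proof -
  show vs: "vector_space scale" using assms unfolding lie_algebra_def by auto
  show l: "br x (y + z) = br x y + br x z" "br (x + y) z = br x z + br y z" "br x x = 0"
    "br (scale a x) y = scale a (br x y)" "br x (scale a y) = scale a (br x y)"
    using assms unfolding lie_algebra_def by auto
  have A: "\<forall>x y z. br (x + y) z = br x z + br y z" "\<forall>x y z. br x (y + z) = br x y + br x z"
    "\<forall>x. br x x = 0" using assms unfolding lie_algebra_def by auto
  have "0 = br (x+y) (x+y)" using A(3) by auto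
  also have "\<dots> = br x (x+y) + br y (x+y)" using A(1) by blast
  also have "\<dots> = br x y + br y x" using A(2,3) by simp
  finally show "br x y = - br y x" by (simp add: eq_neg_iff_add_eq_0)
qed

lemma line_L1:
  assumes "vector_space scale" "w \<in> module.span scale {v}" "w \<noteq> 0" "y \<in> module.span scale {v}"
  shows "y \<in> module.span scale {w}"
proof -
  interpret V: vector_space scale by fact
  obtain a where a: "w = scale a v" using assms(2) by (auto simp: V.span_singleton)
  obtain b where b: "y = scale b v" using assms(4) by (auto simp: V.span_singleton)
  have "a \<noteq> 0" using a assms(3) by auto
  then have "y = scale (b / a) w" using a b by (simp)
  then show ?thesis by (auto simp: V.span_singleton)
qed

lemma line_L2:
  assumes "vector_space scale" "y \<in> module.span scale {p}" "y \<in> module.span scale {q}"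
    "q \<notin> module.span scale {p}"
  shows "y = 0"
proof (rule ccontr)
  interpret V: vector_space scale by fact
  assume "y \<noteq> 0"
  then have "q \<in> module.span scale {y}"
    using line_L1[OF assms(1) assms(3)] V.span_base by blast
  then have "q \<in> module.span scale {p}"
    using assms(2) by (metis V.span_mono V.span_span empty_subsetI insert_subset subsetD)
  then show False using assms(4) by blast
qed


lemma key:
  assumes L: "lie_algebra scale br"
    and line: "\<And>x. \<exists>v. \<forall>u. br x u \<in> module.span scale {v}"
    and p: "br a b \<noteq> 0"
  shows "br c d \<in> module.span scale {br a b}"
proof (rule ccontr)
  note F = lie_facts[OF L]
  interpret V: vector_space scale by (rule F(1))
  define p where "p = br a b"
  define q where "q = br c d"
  assume nq: "br c d \<notin> module.span scale {br a b}"
  then have nq: "q \<notin> V.span {p}" by (simp add: p_def q_def)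
  have p0: "p \<noteq> 0" using p by (simp add: p_def)
  have q0: "q \<noteq> 0" using nq V.span_zero by auto
  have sp: "\<forall>u. br x u \<in> V.span {w}" if "br x y = w \<or> br y x = w" "w \<noteq> 0" for x y w
  proof -
    obtain v where v: "\<forall>u. br x u \<in> V.span {v}" using line by blast
    have "w \<in> V.span {v}" using that(1) v F(5)[of y x] V.span_neg[of "br x y" "{v}"] by auto
    then show ?thesis using line_L1[OF F(1) _ that(2)] v by blast
  qed
  have Sa: "\<forall>u. br a u \<in> V.span {p}" using sp[of a b p] p0 p_def by auto
  have Sb: "\<forall>u. br b u \<in> V.span {p}" using sp[of b a p] p0 p_def by auto
  have Sc: "\<forall>u. br c u \<in> V.span {q}" using sp[of c d q] q0 q_def by auto
  have Sd: "\<forall>u. br d u \<in> V.span {q}" using sp[of d c q] q0 q_def by auto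
  have ad: "br a d = 0"
  proof (rule line_L2[OF F(1) _ _ nq])
    show "br a d \<in> V.span {p}" using Sa by blast
    have "- br d a \<in> V.span {q}" using Sd V.span_neg by blast
    then show "br a d \<in> V.span {q}" using F(5)[of a d] by simp
  qed
  have cb: "br c b = 0"
  proof -
    have "br b c = 0"
    proof (rule line_L2[OF F(1) _ _ nq])
      show "br b c \<in> V.span {p}" using Sb by blast
      have "- br c b \<in> V.span {q}" using Sc V.span_neg by blast
      then show "br b c \<in> V.span {q}" using F(5)[of b c] by simp
    qed
    then show ?thesis using F(5)[of c b] by simp
  qed
  obtain v where v: "\<forall>u. br (a + c) u \<in> V.span {v}" using line by blast
  have "br (a + c) b = p" using cb F(3)[of a c b] p_def by simp
  moreover have "br (a + c) d = q" using ad F(3)[of a c d] q_def by simp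
  ultimately have "p \<in> V.span {v}" "q \<in> V.span {v}" using v by metis+
  then have "q \<in> V.span {p}" using line_L1[OF F(1) _ p0] by blast
  then show False using nq by blast
qed


lemma solv:
  assumes L: "lie_algebra scale br"
    and line: "\<And>x. \<exists>v. \<forall>u. br x u \<in> module.span scale {v}"
  shows "derived_series scale br UNIV (Suc (Suc 0)) = {0}"
proof -
  note F = lie_facts[OF L]
  interpret V: vector_space scale by (rule F(1))
  obtain p0 where p0: "\<forall>a b. br a b \<in> V.span {p0}"
  proof (cases "\<forall>a b. br a b = 0")
    case True
    then show ?thesis using that[of 0] V.span_zero by auto
  next
    case False
    then obtain a b where "br a b \<noteq> 0" by blast
    then show ?thesis using that[of "br a b"] key[OF L line] by blast
  qed
  have D1: "derived_series scale br UNIV (Suc 0) \<subseteq> V.span {p0}"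
  proof -
    have "{br a b | a b. a \<in> UNIV \<and> b \<in> UNIV} \<subseteq> V.span {p0}" using p0 by blast
    then have "V.span {br a b | a b. a \<in> UNIV \<and> b \<in> UNIV} \<subseteq> V.span {p0}"
      using V.span_minimal V.subspace_span by blast
    then show ?thesis by simp
  qed
  have "{br a b | a b. a \<in> derived_series scale br UNIV (Suc 0) \<and> b \<in> derived_series scale br UNIV (Suc 0)} \<subseteq> V.span {}"
  proof clarify
    fix a b assume a: "a \<in> derived_series scale br UNIV (Suc 0)" and b: "b \<in> derived_series scale br UNIV (Suc 0)"
    obtain \<alpha> where "a = scale \<alpha> p0" using a D1 by (auto simp: V.span_singleton)
    moreover obtain \<beta> where "b = scale \<beta> p0" using b D1 by (auto simp: V.span_singleton)
    ultimately have "br a b = scale \<alpha> (scale \<beta> (br p0 p0))" using F(6,7) by simp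
    also have "\<dots> = 0" using F(4) by simp
    finally show "br a b \<in> V.span {}" by simp
  qed
  then have "derived_series scale br UNIV (Suc (Suc 0)) \<subseteq> {0}"
  proof -
    have "V.span {br a b | a b. a \<in> derived_series scale br UNIV (Suc 0) \<and> b \<in> derived_series scale br UNIV (Suc 0)} \<subseteq> V.span {}"
      by (rule V.span_minimal[OF \<open>_ \<subseteq> V.span {}\<close> V.subspace_span])
    then show ?thesis by (simp only: derived_series.simps(2) V.span_empty)
  qed
  then show ?thesis using V.span_zero by auto
qed


theorem proposition2p5:
  fixes scale :: "'k::field \<Rightarrow> 'v::ab_group_add \<Rightarrow> 'v"
    and br :: "'v \<Rightarrow> 'v \<Rightarrow> 'v"
  assumes "(2::'k) \<noteq> 0"
    and "lie_algebra scale br"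
    and "finite_dimensional scale"
    and "semisimple scale br"
  shows "breadth scale br \<ge> 2"
proof (rule ccontr)
  assume nb: "\<not> breadth scale br \<ge> 2"
  note F = lie_facts[OF assms(2)]
  interpret V: vector_space scale by (rule F(1))
  obtain B where B: "finite B" "V.span B = UNIV" using assms(3) unfolding finite_dimensional_def by blast
  have bd: "breadth_elem scale br x \<le> card B" for x
    unfolding breadth_elem_def using V.dim_le_card[of "range (br x)" B] B by auto
  have fin: "finite (range (breadth_elem scale br))"
    by (rule finite_subset[of _ "{..card B}"]) (use bd in auto)
  have le1: "breadth_elem scale br x \<le> 1" for x
  proof -
    have "breadth_elem scale br x \<le> breadth scale br"
      unfolding breadth_def by (rule Max_ge[OF fin]) auto
    then show ?thesis using nb by simp
  qed
  have line: "\<exists>v. \<forall>u. br x u \<in> V.span {v}" for x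
  proof -
    obtain C where C: "C \<subseteq> range (br x)" "V.independent C" "range (br x) \<subseteq> V.span C"
      "card C = V.dim (range (br x))" by (rule V.basis_exists)
    have fC: "finite C" using V.independent_span_bound[OF B(1) C(2)] B(2) by auto
    have c1: "card C \<le> Suc 0" using C(4) le1[of x] unfolding breadth_elem_def by simp
    show ?thesis
    proof (cases "C = {}")
      case True
      then show ?thesis using C(3) V.span_zero by (intro exI[of _ 0]) auto
    next
      case False
      then obtain v where v: "v \<in> C" by blast
      then have "C \<subseteq> {v}" using c1 fC by (auto simp: card_le_Suc0_iff_eq)
      then have "V.span C \<subseteq> V.span {v}" by (rule V.span_mono)
      then show ?thesis using C(3) by (intro exI[of _ v]) auto
    qed
  qed
  have "derived_series scale br UNIV (Suc (Suc 0)) = {0}" by (rule solv[OF assms(2) line])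
  then have "lie_solvable scale br UNIV" unfolding lie_solvable_def by blast
  moreover have "lie_ideal scale br UNIV" unfolding lie_ideal_def by simp
  ultimately have "(UNIV :: 'v set) = {0}" using assms(4) unfolding semisimple_def by blast
  then show False using assms(4) unfolding semisimple_def by blast
qed

end
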